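(* Let $t,p\in\mathbb{N}$ with $p\ge 3t^2+t+1$. Then $X_p\xrightarrow{\cap} tS_{t,t,t}$ and $Y_p\xrightarrow{\cap} tS_{t,t,t}$.
   Context: All graphs are finite and simple. For graphs $G_1=(V_1,E_1)$, $G_2=(V_2,E_2)$, $G_1\cap G_2=(V_1\cap V_2, E_1\cap E_2)$. For a graph $G=(V,E)$ and an injective map $\alpha$ on $V$, $G^{\alpha}$ has vertex set $\alpha(V)$ and edge set $\{\{\alpha(v),\alpha(w)\}: \{v,w\}\in E\}$. We write $G\xrightarrow{\cap} H$ if $H$ is (isomorphic to) $G^{\alpha_1}\cap\cdots\cap G^{\alpha_k}$ for some $k\ge1$ and injective maps $\alpha_1,\dots,\alpha_k$ on $V(G)$. For integers $a,b,c\ge1$, $S_{a,b,c}$ is the tree consisting of a vertex of degree $3$ together with three pendant paths having $a$, $b$, $c$ edges respectively; $tS_{t,t,t}$ is the disjoint union of $t$ copies of $S_{t,t,t}$. $X_p$ is the graph obtained from the complete bipartite graph $K_{p,p}$ by adding a new vertex adjacent to exactly two vertices, both in the same part of $K_{p,p}$; $Y_p$ is obtained from $K_{p,p}$ by adding a new vertex adjacent to exactly two vertices, one in each part. *)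

theory Defs
  imports Main
begin

type_synonym 'a graph = "'a set \<times> 'a set set"

definition verts :: "'a graph \<Rightarrow> 'a set" where "verts G = fst G"
definition edges :: "'a graph \<Rightarrow> 'a set set" where "edges G = snd G"

definition simple_graph :: "'a graph \<Rightarrow> bool" where
  "simple_graph G \<longleftrightarrow> finite (verts G) \<and>
     (\<forall>e\<in>edges G. \<exists>u v. u \<noteq> v \<and> u \<in> verts G \<and> v \<in> verts G \<and> e = {u, v})"

definition gimage :: "('a \<Rightarrow> 'b) \<Rightarrow> 'a graph \<Rightarrow> 'b graph" where
  "gimage \<alpha> G = (\<alpha> ` verts G, (\<lambda>e. \<alpha> ` e) ` edges G)"

definition ginter_images :: "nat \<Rightarrow> (nat \<Rightarrow> 'a \<Rightarrow> 'a) \<Rightarrow> 'a graph \<Rightarrow> 'a graph" where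
  "ginter_images k \<alpha> G =
     ((\<Inter>i<k. verts (gimage (\<alpha> i) G)), (\<Inter>i<k. edges (gimage (\<alpha> i) G)))"

definition graph_iso :: "'a graph \<Rightarrow> 'b graph \<Rightarrow> bool" where
  "graph_iso G H \<longleftrightarrow> (\<exists>f. bij_betw f (verts G) (verts H) \<and>
     (\<forall>u\<in>verts G. \<forall>v\<in>verts G. {u, v} \<in> edges G \<longleftrightarrow> {f u, f v} \<in> edges H))"

text \<open>G \<rightarrow>\<inter> H: H is isomorphic to an intersection of k \<ge> 1 injective images of G
  (maps on V(G) into the vertex universe of G).\<close>
definition inter_arrow :: "'a graph \<Rightarrow> 'b graph \<Rightarrow> bool" where
  "inter_arrow G H \<longleftrightarrow> (\<exists>k \<ge> 1. \<exists>\<alpha> :: nat \<Rightarrow> 'a \<Rightarrow> 'a.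
      (\<forall>i<k. inj_on (\<alpha> i) (verts G)) \<and> graph_iso H (ginter_images k \<alpha> G))"

definition spider :: "nat \<Rightarrow> nat \<Rightarrow> nat \<Rightarrow> (nat \<times> nat) graph" where
  "spider a b c = (let len = (\<lambda>j::nat. if j = 1 then a else if j = 2 then b else c) in
     (insert (0,0) {(j, i) | j i. j \<in> {1,2,3} \<and> 1 \<le> i \<and> i \<le> len j},
      {{(0,0), (j,1)} | j. j \<in> {1,2,3}} \<union>
      {{(j,i), (j, Suc i)} | j i. j \<in> {1,2,3} \<and> 1 \<le> i \<and> i < len j}))"

definition copies :: "nat \<Rightarrow> 'a graph \<Rightarrow> (nat \<times> 'a) graph" where
  "copies t G = ({(c, v) | c v. c < t \<and> v \<in> verts G},
                 {(\<lambda>v. (c, v)) ` e | c e. c < t \<and> e \<in> edges G})"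

definition Kpp :: "nat \<Rightarrow> nat graph" where
  "Kpp p = ({0..<2*p}, {{u, v} | u v. u < p \<and> p \<le> v \<and> v < 2*p})"

text \<open>X_p: new vertex 2p adjacent to 0 and 1 (same part); Y_p: adjacent to 0 and p.\<close>
definition Xg :: "nat \<Rightarrow> nat graph" where
  "Xg p = (insert (2*p) (verts (Kpp p)), edges (Kpp p) \<union> {{2*p, 0}, {2*p, 1}})"

definition Yg :: "nat \<Rightarrow> nat graph" where
  "Yg p = (insert (2*p) (verts (Kpp p)), edges (Kpp p) \<union> {{2*p, 0}, {2*p, p}})"

end

theory Submission
  imports Defs "HOL-Library.Countable"
begin


lemma verts_gimage[simp]: "verts (gimage a G) = a ` verts G"
  by (simp add: gimage_def verts_def)
lemma edges_gimage[simp]: "edges (gimage a G) = (\<lambda>e. a ` e) ` edges G"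
  by (simp add: gimage_def edges_def)
lemma verts_ginter[simp]: "verts (ginter_images k a G) = (\<Inter>i<k. a i ` verts G)"
  by (simp add: ginter_images_def gimage_def verts_def)
lemma edges_ginter[simp]: "edges (ginter_images k a G) = (\<Inter>i<k. (\<lambda>e. a i ` e) ` edges G)"
  by (simp add: ginter_images_def gimage_def edges_def verts_def)

lemma abstract_arrow:
  fixes G :: "nat graph" and H :: "'b::countable graph" and \<beta> :: "nat \<Rightarrow> 'b \<Rightarrow> nat"
  assumes GE: "\<forall>e\<in>edges G. \<exists>a b. a \<noteq> b \<and> a \<in> verts G \<and> b \<in> verts G \<and> e = {a,b}"
  and k2: "k \<ge> 2"
  and bi: "\<forall>i<k. inj_on (\<beta> i) (verts H) \<and> \<beta> i ` verts H \<subseteq> verts G"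
  and sep: "\<forall>u\<in>verts H. \<forall>v\<in>verts H. {u,v} \<in> edges H \<longleftrightarrow> (\<forall>i<k. {\<beta> i u, \<beta> i v} \<in> edges G)"
  shows "inter_arrow G H"
proof -
  let ?W = "verts H"
  define f where "f w = 2 * to_nat w" for w :: 'b
  define \<alpha> where "\<alpha> i v = (if v \<in> \<beta> i ` ?W then f (the_inv_into ?W (\<beta> i) v) else 2 * to_nat (i,v) + 1)" for i v
  have injf: "inj f" by (auto simp: f_def inj_def)
  have \<alpha>\<beta>: "\<alpha> i (\<beta> i w) = f w" if "i<k" "w \<in> ?W" for i w
    using bi that by (auto simp: \<alpha>_def the_inv_into_f_f)
  have injA: "inj_on (\<alpha> i) (verts G)" if "i<k" for i
  proof (rule inj_onI)
    fix a b assume a: "a \<in> verts G" "b \<in> verts G" "\<alpha> i a = \<alpha> i b"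
    show "a = b"
    proof (cases "a \<in> \<beta> i ` ?W")
      case True
      then obtain u where u: "u\<in>?W" "a = \<beta> i u" by auto
      show ?thesis
      proof (cases "b \<in> \<beta> i ` ?W")
        case True
        then obtain v where v: "v \<in> ?W" "b = \<beta> i v" by auto
        then have "f u = f v" using a u \<alpha>\<beta> that by metis
        then have "u = v" using injf by (simp add: inj_eq)
        then show ?thesis using u v by simp
      next
        case False
        then have "\<alpha> i b = 2 * to_nat (i,b) + 1" by (simp add: \<alpha>_def)
        moreover have "\<alpha> i a = f u" using \<alpha>\<beta> u that by simp
        ultimately show ?thesis using a by (simp add: f_def) presburger
      qed
    next
      case False
      then have A: "\<alpha> i a = 2 * to_nat (i,a) + 1" by (simp add: \<alpha>_def)
      show ?thesis
      proof (cases "b \<in> \<beta> i ` ?W")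
        case True
        then obtain v where v: "v \<in> ?W" "b = \<beta> i v" by auto
        then have "\<alpha> i b = f v" using \<alpha>\<beta> that by simp
        then show ?thesis using a A by (simp add: f_def) presburger
      next
        case False
        then have "\<alpha> i b = 2 * to_nat (i,b) + 1" by (simp add: \<alpha>_def)
        then show ?thesis using a A by simp
      qed
    qed
  qed
  have VI: "(\<Inter>i<k. \<alpha> i ` verts G) = f ` ?W"
  proof
    show "f ` ?W \<subseteq> (\<Inter>i<k. \<alpha> i ` verts G)"
    proof
      fix z assume "z \<in> f ` ?W"
      then obtain w where w: "w \<in> ?W" "z = f w" by auto
      show "z \<in> (\<Inter>i<k. \<alpha> i ` verts G)"
      proof
        fix i assume "i \<in> {..<k}"
        then have "i < k" by simp
        then have "z = \<alpha> i (\<beta> i w)" "\<beta> i w \<in> verts G" using \<alpha>\<beta> w bi by (auto simp: image_subset_iff)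
        then show "z \<in> \<alpha> i ` verts G" by simp
      qed
    qed
  next
    show "(\<Inter>i<k. \<alpha> i ` verts G) \<subseteq> f ` ?W"
    proof
      fix z assume z: "z \<in> (\<Inter>i<k. \<alpha> i ` verts G)"
      have "z \<in> \<alpha> 0 ` verts G" "z \<in> \<alpha> 1 ` verts G" using z k2 by auto
      then obtain a b where ab: "z = \<alpha> 0 a" "z = \<alpha> 1 b" by (metis imageE)
      show "z \<in> f ` ?W"
      proof (cases "a \<in> \<beta> 0 ` ?W")
        case True
        then obtain x where x: "x \<in> ?W" "a = \<beta> 0 x" by auto
        then have "z = f x" using ab \<alpha>\<beta>[of 0 x] k2 by simp
        then show ?thesis using x by simp
      next
        case False
        then have za: "z = 2 * to_nat (0::nat,a) + 1" using ab by (simp add: \<alpha>_def)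
        show ?thesis
        proof (cases "b \<in> \<beta> 1 ` ?W")
          case True
          then have "z = f (the_inv_into ?W (\<beta> 1) b)" using ab by (simp add: \<alpha>_def)
          then show ?thesis using za by (simp add: f_def) presburger
        next
          case False
          then have "z = 2 * to_nat (1::nat,b) + 1" using ab by (simp add: \<alpha>_def)
          then have "to_nat (0::nat,a) = to_nat (1::nat,b)" using za by simp
          then show ?thesis by simp
        qed
      qed
    qed
  qed
  have EI1: "{f u, f v} \<in> (\<lambda>e. \<alpha> i ` e) ` edges G \<longleftrightarrow> {\<beta> i u, \<beta> i v} \<in> edges G"
    if "i < k" "u \<in> ?W" "v \<in> ?W" for i u v
  proof
    assume "{\<beta> i u, \<beta> i v} \<in> edges G"
    moreover have "\<alpha> i ` {\<beta> i u, \<beta> i v} = {f u, f v}" using \<alpha>\<beta> that by simp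
    ultimately show "{f u, f v} \<in> (\<lambda>e. \<alpha> i ` e) ` edges G" by (metis image_eqI)
  next
    assume "{f u, f v} \<in> (\<lambda>e. \<alpha> i ` e) ` edges G"
    then obtain e where e: "e \<in> edges G" "\<alpha> i ` e = {f u, f v}" by auto
    obtain a b where "e = {a,b}" "a \<in> verts G" "b \<in> verts G" using GE e(1) by meson
    then have s1: "e \<subseteq> verts G" by simp
    have s2: "{\<beta> i u, \<beta> i v} \<subseteq> verts G" using bi that by auto
    have s3: "\<alpha> i ` e = \<alpha> i ` {\<beta> i u, \<beta> i v}" using e(2) \<alpha>\<beta> that by simp
    have "e = {\<beta> i u, \<beta> i v}" using inj_on_image_eq_iff[OF injA[OF that(1)] s1 s2] s3 by blast
    then show "{\<beta> i u, \<beta> i v} \<in> edges G" using e by simp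
  qed
  have iso: "graph_iso H (ginter_images k \<alpha> G)"
    unfolding graph_iso_def
  proof (intro exI conjI ballI)
    show "bij_betw f ?W (verts (ginter_images k \<alpha> G))"
      using VI inj_on_subset[OF injf subset_UNIV] by (simp add: bij_betw_def)
  next
    fix u v assume uv: "u \<in> ?W" "v \<in> ?W"
    show "{u, v} \<in> edges H \<longleftrightarrow> {f u, f v} \<in> edges (ginter_images k \<alpha> G)"
      using sep uv EI1 by auto
  qed
  show ?thesis unfolding inter_arrow_def
    using k2 injA iso by (intro exI[of _ k] conjI exI[of _ \<alpha>]) auto
qed

definition goodmap :: "nat graph \<Rightarrow> 'b graph \<Rightarrow> ('b \<Rightarrow> nat) \<Rightarrow> bool" where
  "goodmap G H b \<longleftrightarrow> inj_on b (verts H) \<and> b ` verts H \<subseteq> verts G \<and>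
     (\<forall>u\<in>verts H. \<forall>v\<in>verts H. {u,v} \<in> edges H \<longrightarrow> {b u, b v} \<in> edges G)"

lemma family_arrow:
  fixes G :: "nat graph" and H :: "'b::countable graph"
  assumes GE: "\<forall>e\<in>edges G. \<exists>a b. a \<noteq> b \<and> a \<in> verts G \<and> b \<in> verts G \<and> e = {a,b}"
  and finW: "finite (verts H)"
  and ex0: "\<exists>b. goodmap G H b"
  and sepx: "\<forall>u\<in>verts H. \<forall>v\<in>verts H. {u,v} \<notin> edges H \<longrightarrow>
                 (\<exists>b. goodmap G H b \<and> {b u, b v} \<notin> edges G)"
  shows "inter_arrow G H"
proof -
  let ?W = "verts H"
  obtain b0 where b0: "goodmap G H b0" using ex0 by auto
  define m where "m = card (?W \<times> ?W)"
  obtain h where h: "bij_betw h {0..<m} (?W \<times> ?W)"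
    using ex_bij_betw_nat_finite[of "?W \<times> ?W"] finW m_def by auto
  define \<beta> where "\<beta> i = (if i < m \<and> {fst (h i), snd (h i)} \<notin> edges H then
      (SOME b. goodmap G H b \<and> {b (fst (h i)), b (snd (h i))} \<notin> edges G) else b0)" for i
  have good: "goodmap G H (\<beta> i)" for i
  proof (cases "i < m \<and> {fst (h i), snd (h i)} \<notin> edges H")
    case True
    then have "h i \<in> ?W \<times> ?W" using h by (metis atLeastLessThan_iff bij_betwE zero_le)
    then have "\<exists>b. goodmap G H b \<and> {b (fst (h i)), b (snd (h i))} \<notin> edges G"
      using sepx True by auto
    then have "goodmap G H (SOME b. goodmap G H b \<and> {b (fst (h i)), b (snd (h i))} \<notin> edges G)
      \<and> {(SOME b. goodmap G H b \<and> {b (fst (h i)), b (snd (h i))} \<notin> edges G) (fst (h i)),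
          (SOME b. goodmap G H b \<and> {b (fst (h i)), b (snd (h i))} \<notin> edges G) (snd (h i))} \<notin> edges G"
      by (rule someI_ex)
    then show ?thesis unfolding \<beta>_def using True by simp
  next
    case False
    have "\<beta> i = b0" unfolding \<beta>_def by (rule if_not_P[OF False])
    then show ?thesis using b0 by simp
  qed
  show ?thesis
  proof (rule abstract_arrow[of G "m+2" \<beta> H])
    show "\<forall>e\<in>edges G. \<exists>a b. a \<noteq> b \<and> a \<in> verts G \<and> b \<in> verts G \<and> e = {a,b}" by fact
    show "2 \<le> m + 2" by simp
    show "\<forall>i<m + 2. inj_on (\<beta> i) ?W \<and> \<beta> i ` ?W \<subseteq> verts G"
      using good by (auto simp: goodmap_def)
    show "\<forall>u\<in>?W. \<forall>v\<in>?W. ({u, v} \<in> edges H) = (\<forall>i<m + 2. {\<beta> i u, \<beta> i v} \<in> edges G)"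
    proof (intro ballI iffI allI impI)
      fix u v i assume "u \<in> ?W" "v \<in> ?W" "{u, v} \<in> edges H"
      then show "{\<beta> i u, \<beta> i v} \<in> edges G" using good[of i] by (auto simp: goodmap_def)
    next
      fix u v assume uv: "u \<in> ?W" "v \<in> ?W" and all: "\<forall>i<m + 2. {\<beta> i u, \<beta> i v} \<in> edges G"
      show "{u, v} \<in> edges H"
      proof (rule ccontr)
        assume nE: "{u, v} \<notin> edges H"
        have "(u,v) \<in> h ` {0..<m}" using h uv by (simp add: bij_betw_def)
        then obtain i where i: "i < m" "h i = (u,v)" by (metis atLeastLessThan_iff imageE)
        then have bi: "\<beta> i = (SOME b. goodmap G H b \<and> {b u, b v} \<notin> edges G)"
          using nE by (simp add: \<beta>_def)
        have "\<exists>b. goodmap G H b \<and> {b u, b v} \<notin> edges G" using sepx uv nE by auto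
        then have "goodmap G H (SOME b. goodmap G H b \<and> {b u, b v} \<notin> edges G) \<and>
          {(SOME b. goodmap G H b \<and> {b u, b v} \<notin> edges G) u,
           (SOME b. goodmap G H b \<and> {b u, b v} \<notin> edges G) v} \<notin> edges G"
          by (rule someI_ex)
        then have "{\<beta> i u, \<beta> i v} \<notin> edges G" using bi by simp
        then show False using all i by auto
      qed
    qed
  qed
qed



abbreviation "HH t \<equiv> copies t (spider t t t)"

lemma memH: "(c,j,i) \<in> verts (HH t) \<longleftrightarrow> c<t \<and> ((j=0 \<and> i=0) \<or> (j\<in>{1,2,3} \<and> 1\<le>i \<and> i\<le>t))"
  by (auto simp: copies_def spider_def verts_def Let_def)

lemma edgesH: "edges (HH t) = {{(c,0,0),(c,j,1)} | c j. c<t \<and> j\<in>{1,2,3}} \<union>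
   {{(c,j,i),(c,j,Suc i)} | c j i. c<t \<and> j\<in>{1,2,3} \<and> 1\<le>i \<and> i<t}"
  (is "?L = ?R")
proof -
  have ES: "edges (spider t t t) = {{(0,0),(j,1)} | j. j\<in>{1,2,3}} \<union>
      {{(j,i),(j,Suc i)} | j i. j\<in>{1,2,3} \<and> 1\<le>i \<and> i<t}"
    unfolding spider_def edges_def Let_def if_cancel by simp
  have EC: "?L = {Pair c ` e | c e. c<t \<and> e \<in> edges (spider t t t)}"
    unfolding copies_def edges_def by simp
  show ?thesis
  proof
    show "?L \<subseteq> ?R"
    proof
      fix x assume "x \<in> ?L"
      then obtain c e where ce: "x = Pair c ` e" "c<t" "e \<in> edges (spider t t t)" using EC by auto
      show "x \<in> ?R" using ce(3) unfolding ES
      proof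
        assume "e \<in> {{(0,0),(j,1)} | j. j\<in>{1,2,3}}"
        then obtain j where "e = {(0,0),(j,1)}" "j\<in>{1,2,3}" by auto
        then show "x \<in> ?R" using ce by auto
      next
        assume "e \<in> {{(j,i),(j,Suc i)} | j i. j\<in>{1,2,3} \<and> 1\<le>i \<and> i<t}"
        then obtain j i where "e = {(j,i),(j,Suc i)}" "j\<in>{1,2,3}" "1\<le>i" "i<t" by auto
        then show "x \<in> ?R" using ce by blast
      qed
    qed
  next
    show "?R \<subseteq> ?L"
    proof
      fix x assume "x \<in> ?R"
      then show "x \<in> ?L"
      proof
        assume "x \<in> {{(c,0,0),(c,j,1)} | c j. c<t \<and> j\<in>{1,2,3}}"
        then obtain c j where cj: "x = {(c,0,0),(c,j,1)}" "c<t" "j\<in>{1,2,3}" by auto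
        then have "x = Pair c ` {(0,0),(j,1)}" "{(0,0),(j,1)} \<in> edges (spider t t t)"
          unfolding ES by auto
        then show "x \<in> ?L" using EC cj by blast
      next
        assume "x \<in> {{(c,j,i),(c,j,Suc i)} | c j i. c<t \<and> j\<in>{1,2,3} \<and> 1\<le>i \<and> i<t}"
        then obtain c j i where cj: "x = {(c,j,i),(c,j,Suc i)}" "c<t" "j\<in>{1,2,3}" "1\<le>i" "i<t" by auto
        then have "x = Pair c ` {(j,i),(j,Suc i)}" "{(j,i),(j,Suc i)} \<in> edges (spider t t t)"
          unfolding ES by auto
        then show "x \<in> ?L" using EC cj by blast
      qed
    qed
  qed
qed

fun sadj :: "nat \<times> nat \<times> nat \<Rightarrow> nat \<times> nat \<times> nat \<Rightarrow> bool" where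
  "sadj (c,j,i) (c',j',i') = (c = c' \<and> ((j=0 \<and> i=0 \<and> j'\<noteq>0 \<and> i'=1) \<or> (j'=0 \<and> i'=0 \<and> j\<noteq>0 \<and> i=1)
      \<or> (j=j' \<and> j\<noteq>0 \<and> (i'=i+1 \<or> i=i'+1))))"

lemma edgeH: assumes "(c,j,i) \<in> verts (HH t)" "(c',j',i') \<in> verts (HH t)"
  shows "{(c,j,i),(c',j',i')} \<in> edges (HH t) \<longleftrightarrow> sadj (c,j,i) (c',j',i')"
proof
  assume "{(c,j,i),(c',j',i')} \<in> edges (HH t)"
  then show "sadj (c,j,i) (c',j',i')"
    unfolding edgesH by (auto simp: doubleton_eq_iff)
next
  assume s: "sadj (c,j,i) (c',j',i')"
  have m: "c < t" "c' < t" "(j=0 \<and> i=0) \<or> (j\<in>{1,2,3} \<and> 1\<le>i \<and> i\<le>t)" "(j'=0 \<and> i'=0) \<or> (j'\<in>{1,2,3} \<and> 1\<le>i' \<and> i'\<le>t)"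
    using assms by (auto simp: memH)
  from s have "c = c'" by simp
  from s consider "j=0" "i=0" "j'\<noteq>0" "i'=1" | "j'=0" "i'=0" "j\<noteq>0" "i=1" | "j=j'" "j\<noteq>0" "i'=i+1" | "j=j'" "j\<noteq>0" "i=i'+1"
    by auto
  then show "{(c,j,i),(c',j',i')} \<in> edges (HH t)"
  proof cases
    case 1 then show ?thesis using m \<open>c = c'\<close> unfolding edgesH by blast
  next
    case 2 then have "{(c,j,i),(c',j',i')} = {(c,0,0),(c,j,1)}" using \<open>c = c'\<close> by auto
    then show ?thesis using m 2 unfolding edgesH by blast
  next
    case 3
    then have "j \<in> {1,2,3}" "1 \<le> i" "i < t" using m by auto
    then have "{(c,j,i),(c,j,Suc i)} \<in> {{(c,j,i),(c,j,Suc i)} | c j i. c<t \<and> j\<in>{1,2,3} \<and> 1\<le>i \<and> i<t}"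
      using m by blast
    then show ?thesis using 3 \<open>c = c'\<close> unfolding edgesH by auto
  next
    case 4 then have "{(c,j,i),(c',j',i')} = {(c,j,i'),(c,j,Suc i')}" using \<open>c = c'\<close> by auto
    moreover have "j \<in> {1,2,3}" "1 \<le> i'" "i' < t" using m 4 by auto
    then have "{(c,j,i'),(c,j,Suc i')} \<in> {{(c,j,i),(c,j,Suc i)} | c j i. c<t \<and> j\<in>{1,2,3} \<and> 1\<le>i \<and> i<t}"
      using m by blast
    ultimately show ?thesis unfolding edgesH by auto
  qed
qed



definition Gq :: "nat \<Rightarrow> nat \<Rightarrow> nat graph" where
  "Gq p q = (insert (2*p) {0..<2*p}, {{u,v}|u v. u<p \<and> p\<le>v \<and> v<2*p} \<union> {{2*p,0},{2*p,q}})"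

lemma Xg_Gq: "Xg p = Gq p 1" by (simp add: Xg_def Gq_def Kpp_def verts_def edges_def)
lemma Yg_Gq: "Yg p = Gq p p" by (simp add: Yg_def Gq_def Kpp_def verts_def edges_def)
lemma vertsG: "verts (Gq p q) = insert (2*p) {0..<2*p}" by (simp add: Gq_def verts_def)
lemma edgeG: "{a,b} \<in> edges (Gq p q) \<longleftrightarrow> (a<p \<and> p\<le>b \<and> b<2*p) \<or> (b<p \<and> p\<le>a \<and> a<2*p)
   \<or> {a,b}={2*p,0} \<or> {a,b}={2*p,q}"
  by (auto simp: Gq_def edges_def doubleton_eq_iff)

lemma GE_Gq: assumes "0 < q" "q < 2*p"
  shows "\<forall>e\<in>edges (Gq p q). \<exists>a b. a\<noteq>b \<and> a\<in>verts (Gq p q) \<and> b\<in>verts (Gq p q) \<and> e={a,b}"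
proof
  fix e assume "e \<in> edges (Gq p q)"
  then have "(\<exists>u v. e = {u,v} \<and> u<p \<and> p\<le>v \<and> v<2*p) \<or> e = {2*p,0} \<or> e = {2*p,q}"
    by (auto simp: Gq_def edges_def)
  then show "\<exists>a b. a\<noteq>b \<and> a\<in>verts (Gq p q) \<and> b\<in>verts (Gq p q) \<and> e={a,b}"
  proof (elim disjE exE conjE)
    fix u v assume "e = {u,v}" "u<p" "p\<le>v" "v<2*p"
    then show ?thesis by (intro exI[of _ u] exI[of _ v]) (auto simp: vertsG)
  next
    assume "e = {2*p,0}" then show ?thesis using assms by (intro exI[of _ "2*p"] exI[of _ 0]) (auto simp: vertsG)
  next
    assume "e = {2*p,q}" then show ?thesis using assms by (intro exI[of _ "2*p"] exI[of _ q]) (auto simp: vertsG)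
  qed
qed

lemma bip_exists:
  assumes "finite S" "finite TA" "finite TB" "card {v\<in>S. \<not>\<sigma> v} \<le> card TA"
    "card {v\<in>S. \<sigma> v} \<le> card TB" "TA \<inter> TB = {}"
  shows "\<exists>\<beta>. inj_on \<beta> S \<and> (\<forall>v\<in>S. \<beta> v \<in> (if \<sigma> v then TB else TA))"
proof -
  obtain fA where fA: "fA ` {v\<in>S. \<not>\<sigma> v} \<subseteq> TA" "inj_on fA {v\<in>S. \<not>\<sigma> v}"
    using card_le_inj[of "{v\<in>S. \<not>\<sigma> v}" TA] assms by auto
  obtain fB where fB: "fB ` {v\<in>S. \<sigma> v} \<subseteq> TB" "inj_on fB {v\<in>S. \<sigma> v}"
    using card_le_inj[of "{v\<in>S. \<sigma> v}" TB] assms by auto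
  define \<beta> where "\<beta> v = (if \<sigma> v then fB v else fA v)" for v
  have R: "\<forall>v\<in>S. \<beta> v \<in> (if \<sigma> v then TB else TA)" using fA fB by (auto simp: \<beta>_def)
  have "inj_on \<beta> S"
  proof (rule inj_onI)
    fix a b assume ab: "a \<in> S" "b \<in> S" "\<beta> a = \<beta> b"
    show "a = b"
    proof (cases "\<sigma> a"; cases "\<sigma> b")
      assume "\<sigma> a" "\<sigma> b" then show ?thesis using ab fB(2) by (auto simp: \<beta>_def inj_on_def)
    next
      assume "\<not>\<sigma> a" "\<not>\<sigma> b" then show ?thesis using ab fA(2) by (auto simp: \<beta>_def inj_on_def)
    next
      assume "\<sigma> a" "\<not>\<sigma> b" then show ?thesis using ab R assms(6) by (metis disjoint_iff)
    next
      assume "\<not>\<sigma> a" "\<sigma> b" then show ?thesis using ab R assms(6) by (metis disjoint_iff)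
    qed
  qed
  then show ?thesis using R by blast
qed

lemma card_sub: "finite S \<Longrightarrow> card {v\<in>S. P v} \<le> card S"
  by (simp add: card_mono)

lemma bip_good:
  fixes H :: "'b graph" and \<sigma> :: "'b \<Rightarrow> bool"
  assumes fin: "finite (verts H)" and cW: "card (verts H) \<le> p"
  and proper: "\<forall>u\<in>verts H. \<forall>v\<in>verts H. {u,v}\<in>edges H \<longrightarrow> \<sigma> u \<noteq> \<sigma> v"
  shows "\<exists>\<beta>. goodmap (Gq p q) H \<beta> \<and>
     (\<forall>u\<in>verts H. \<forall>v\<in>verts H. \<sigma> u = \<sigma> v \<longrightarrow> {\<beta> u, \<beta> v} \<notin> edges (Gq p q))"
proof -
  let ?W = "verts H"
  obtain \<beta> where \<beta>: "inj_on \<beta> ?W" "\<forall>v\<in>?W. \<beta> v \<in> (if \<sigma> v then {p..<2*p} else {0..<p})"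
    using bip_exists[of ?W "{0..<p}" "{p..<2*p}" \<sigma>] fin cW card_sub[OF fin, of \<sigma>]
      card_sub[OF fin, of "\<lambda>v. \<not> \<sigma> v"] by fastforce
  have B: "\<And>v. v \<in> ?W \<Longrightarrow> (\<sigma> v \<longrightarrow> p \<le> \<beta> v \<and> \<beta> v < 2*p) \<and> (\<not>\<sigma> v \<longrightarrow> \<beta> v < p)"
    using \<beta>(2) by (auto split: if_splits)
  have "goodmap (Gq p q) H \<beta>"
    unfolding goodmap_def
  proof (intro conjI ballI impI)
    show "inj_on \<beta> ?W" by fact
    show "\<beta> ` ?W \<subseteq> verts (Gq p q)" using B by (fastforce simp: vertsG)
  next
    fix u v assume uv: "u \<in> ?W" "v \<in> ?W" "{u,v} \<in> edges H"
    then have "\<sigma> u \<noteq> \<sigma> v" using proper by blast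
    then show "{\<beta> u, \<beta> v} \<in> edges (Gq p q)" using B[OF uv(1)] B[OF uv(2)] by (auto simp: edgeG)
  qed
  moreover have "\<forall>u\<in>?W. \<forall>v\<in>?W. \<sigma> u = \<sigma> v \<longrightarrow> {\<beta> u, \<beta> v} \<notin> edges (Gq p q)"
  proof (intro ballI impI)
    fix u v assume uv: "u \<in> ?W" "v \<in> ?W" "\<sigma> u = \<sigma> v"
    show "{\<beta> u, \<beta> v} \<notin> edges (Gq p q)"
      using B[OF uv(1)] B[OF uv(2)] uv(3) by (auto simp: edgeG doubleton_eq_iff)
  qed
  ultimately show ?thesis by blast
qed

lemma w_good:
  fixes H :: "'b graph" and \<sigma> :: "'b \<Rightarrow> bool"
  assumes fin: "finite (verts H)" and cW: "card (verts H) \<le> p - 1" and p3: "p \<ge> 3"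
  and q: "q = 1 \<or> q = p"
  and w: "w \<in> verts H" "x \<in> verts H" "w \<noteq> x" "w \<noteq> y" "x \<noteq> y"
  and irr: "\<forall>a\<in>verts H. {a,a} \<notin> edges H"
  and Nw: "\<forall>v\<in>verts H. {w,v} \<in> edges H \<longleftrightarrow> (v = x \<or> v = y)"
  and xy: "{x,y} \<notin> edges H"
  and c1: "\<forall>a\<in>verts H - {w,x,y}. \<forall>b\<in>verts H - {w,x,y}. {a,b} \<in> edges H \<longrightarrow> \<sigma> a \<noteq> \<sigma> b"
  and c2: "\<forall>b\<in>verts H - {w,x,y}. {x,b} \<in> edges H \<longrightarrow> \<sigma> b"
  and c3: "\<forall>b\<in>verts H - {w,x,y}. {y,b} \<in> edges H \<longrightarrow> \<sigma> b = (q = 1)"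
  shows "\<exists>\<beta>. goodmap (Gq p q) H \<beta> \<and>
     (\<forall>v\<in>verts H. {w,v} \<notin> edges H \<longrightarrow> {\<beta> w, \<beta> v} \<notin> edges (Gq p q))"
proof -
  let ?W = "verts H"
  let ?W' = "verts H - {w,x,y}"
  have finW': "finite ?W'" using fin by simp
  have "card ?W' \<le> card (?W - {w})" using fin by (intro card_mono) auto
  also have "\<dots> = card ?W - 1" using w fin by simp
  finally have cW': "card ?W' \<le> p - 2" using cW by simp
  obtain \<beta>' where \<beta>': "inj_on \<beta>' ?W'" "\<forall>v\<in>?W'. \<beta>' v \<in> (if \<sigma> v then {Suc p..<2*p} else {2..<p})"
    using bip_exists[of ?W' "{2..<p}" "{Suc p..<2*p}" \<sigma>] finW' cW' card_sub[OF finW', of \<sigma>]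
      card_sub[OF finW', of "\<lambda>v. \<not> \<sigma> v"] by fastforce
  define \<beta> where "\<beta> = \<beta>'(w := 2*p, x := 0, y := q)"
  have bw: "\<beta> w = 2*p" and bx: "\<beta> x = 0" and by': "\<beta> y = q" using w by (auto simp: \<beta>_def)
  have bo: "\<beta> v = \<beta>' v" if "v \<in> ?W'" for v using that by (auto simp: \<beta>_def)
  have B: "\<And>v. v \<in> ?W' \<Longrightarrow> (\<sigma> v \<longrightarrow> Suc p \<le> \<beta> v \<and> \<beta> v < 2*p) \<and> (\<not>\<sigma> v \<longrightarrow> 2 \<le> \<beta> v \<and> \<beta> v < p)"
    using \<beta>'(2) bo by (auto split: if_splits)
  have qr: "0 < q" "q < 2*p" "q \<noteq> 2*p" using q p3 by auto
  have inj: "inj_on \<beta> ?W"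
  proof (rule inj_onI)
    fix a b assume ab: "a \<in> ?W" "b \<in> ?W" "\<beta> a = \<beta> b"
    show "a = b"
    proof (cases "a \<in> ?W'"; cases "b \<in> ?W'")
      assume "a \<in> ?W'" "b \<in> ?W'"
      then show ?thesis using ab \<beta>'(1) bo by (metis inj_onD)
    next
      assume a: "a \<in> ?W'" "b \<notin> ?W'"
      then have "b = w \<or> b = x \<or> b = y" using ab by auto
      then show ?thesis using B[OF a(1)] ab bw bx by' q p3 by (cases "\<sigma> a") auto
    next
      assume a: "a \<notin> ?W'" "b \<in> ?W'"
      then have "a = w \<or> a = x \<or> a = y" using ab by auto
      then show ?thesis using B[OF a(2)] ab bw bx by' q p3 by (cases "\<sigma> b") auto
    next
      assume "a \<notin> ?W'" "b \<notin> ?W'"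
      then have "a = w \<or> a = x \<or> a = y" "b = w \<or> b = x \<or> b = y" using ab by auto
      then show ?thesis using ab bw bx by' qr by auto
    qed
  qed
  have rng: "\<beta> ` ?W \<subseteq> verts (Gq p q)"
  proof
    fix z assume "z \<in> \<beta> ` ?W"
    then obtain v where v: "v \<in> ?W" "z = \<beta> v" by auto
    show "z \<in> verts (Gq p q)"
    proof (cases "v \<in> ?W'")
      case True then show ?thesis using B[OF True] v by (cases "\<sigma> v") (auto simp: vertsG)
    next
      case False then have "v = w \<or> v = x \<or> v = y" using v by auto
      then show ?thesis using v bw bx by' qr by (auto simp: vertsG)
    qed
  qed
  have key1: "{\<beta> a, \<beta> b} \<in> edges (Gq p q)"
    if ab: "a \<in> ?W" "b \<in> ?W" "{a,b} \<in> edges H" "a \<in> {w,x,y}" for a b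
  proof -
    consider "a = w" | "a = x" "a \<noteq> w" | "a = y" "a \<noteq> w" "a \<noteq> x" using ab(4) by auto
    then show ?thesis
    proof cases
      case 1
      then have "b = x \<or> b = y" using Nw ab by auto
      then show ?thesis using 1 bw bx by' w by (auto simp: edgeG)
    next
      case 2
      show ?thesis
      proof (cases "b \<in> ?W'")
        case True
        then have "\<sigma> b" using c2 ab 2 by auto
        then show ?thesis using B[OF True] 2 bx p3 by (auto simp: edgeG)
      next
        case False
        then have "b = w \<or> b = x \<or> b = y" using ab by auto
        moreover have "b \<noteq> x" using irr ab 2 by auto
        moreover have "b \<noteq> y" using xy ab 2 by auto
        ultimately show ?thesis using 2 bw bx by (auto simp: edgeG insert_commute)
      qed
    next
      case 3
      show ?thesis
      proof (cases "b \<in> ?W'")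
        case True
        then have s: "\<sigma> b = (q = 1)" using c3 ab 3 by auto
        show ?thesis
        proof (cases "q = 1")
          case True
          then show ?thesis using B[OF \<open>b \<in> ?W'\<close>] s 3 by' p3 by (auto simp: edgeG)
        next
          case False
          then have "q = p" using q by auto
          then show ?thesis using B[OF \<open>b \<in> ?W'\<close>] s 3 by' p3 False by (auto simp: edgeG)
        qed
      next
        case False
        then have "b = w \<or> b = x \<or> b = y" using ab by auto
        moreover have "b \<noteq> y" using irr ab 3 by auto
        moreover have "b \<noteq> x" using xy ab 3 by (auto simp: insert_commute)
        ultimately show ?thesis using 3 bw by' by (auto simp: edgeG insert_commute)
      qed
    qed
  qed
  have good: "goodmap (Gq p q) H \<beta>"
    unfolding goodmap_def
  proof (intro conjI ballI impI inj rng)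
    fix a b assume ab: "a \<in> ?W" "b \<in> ?W" "{a,b} \<in> edges H"
    show "{\<beta> a, \<beta> b} \<in> edges (Gq p q)"
    proof (cases "a \<in> {w,x,y}")
      case True then show ?thesis using key1 ab by blast
    next
      case F1: False
      show ?thesis
      proof (cases "b \<in> {w,x,y}")
        case True then show ?thesis using key1[of b a] ab by (simp add: insert_commute)
      next
        case False
        then have "\<sigma> a \<noteq> \<sigma> b" using c1 ab F1 by auto
        then show ?thesis using B[of a] B[of b] ab F1 False by (cases "\<sigma> a") (auto simp: edgeG)
      qed
    qed
  qed
  moreover have "\<forall>v\<in>?W. {w,v} \<notin> edges H \<longrightarrow> {\<beta> w, \<beta> v} \<notin> edges (Gq p q)"
  proof (intro ballI impI)
    fix v assume v: "v \<in> ?W" "{w,v} \<notin> edges H"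
    then have vxy: "v \<noteq> x" "v \<noteq> y" using Nw by auto
    show "{\<beta> w, \<beta> v} \<notin> edges (Gq p q)"
    proof (cases "v = w")
      case True then show ?thesis using bw edgeG[of "2*p" "2*p" p q] qr p3 by (auto simp: doubleton_eq_iff)
    next
      case False
      then have "v \<in> ?W'" using v vxy by auto
      then show ?thesis using B[of v] bw qr q p3 by (cases "\<sigma> v") (auto simp: edgeG doubleton_eq_iff)
    qed
  qed
  ultimately show ?thesis by blast
qed



lemma edgeH_mem: assumes "{a,b} \<in> edges (HH t)" shows "a \<in> verts (HH t)" "b \<in> verts (HH t)"
  using assms unfolding edgesH by (auto simp: memH doubleton_eq_iff)

lemma edgeH2: assumes "a \<in> verts (HH t)" "b \<in> verts (HH t)"
  shows "{a,b} \<in> edges (HH t) \<longleftrightarrow> sadj a b"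
  using assms edgeH by (cases a; cases b) auto

lemma wcase:
  assumes t1: "t \<ge> 1" and p: "p \<ge> 3*t^2+t+1" and q: "q = 1 \<or> q = p"
  and cW: "card (verts (HH t)) \<le> p - 1" and fin: "finite (verts (HH t))"
  and w: "(c,j,i) \<in> verts (HH t)" "j \<noteq> 0" and z: "z \<in> verts (HH t)" "{(c,j,i),z} \<notin> edges (HH t)"
  shows "\<exists>\<beta>. goodmap (Gq p q) (HH t) \<beta> \<and> {\<beta> (c,j,i), \<beta> z} \<notin> edges (Gq p q)"
proof -
  let ?W = "verts (HH t)"
  define x where "x = (if i = 1 then (c,0,0) else (c,j,i-1))"
  define y where "y = (c,j,i+1)"
  define \<sigma> where "\<sigma> v = (if q = 1 then odd (snd (snd v)) = odd i else
     if fst v = c \<and> fst (snd v) = j \<and> snd (snd v) > i then odd (snd (snd v)) \<noteq> odd i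
     else odd (snd (snd v)) = odd i)" for v :: "nat \<times> nat \<times> nat"
  have wm: "c < t" "j \<in> {1,2,3}" "1 \<le> i" "i \<le> t" using w by (auto simp: memH)
  have "t^2 \<ge> 1" using t1 by simp
  then have p3: "p \<ge> 3" using p by linarith
  have xm: "x \<in> ?W" using wm by (auto simp: x_def memH)
  have d: "(c,j,i) \<noteq> x" "(c,j,i) \<noteq> y" "x \<noteq> y" using wm by (auto simp: x_def y_def)
  have irr: "\<forall>a\<in>?W. {a,a} \<notin> edges (HH t)"
  proof
    fix a assume a: "a \<in> ?W"
    obtain c' j' i' where a': "a = (c',j',i')" by (cases a)
    show "{a,a} \<notin> edges (HH t)" using edgeH2[OF a a] unfolding a' by auto
  qed
  have Nw: "\<forall>v\<in>?W. {(c,j,i),v} \<in> edges (HH t) \<longleftrightarrow> (v = x \<or> v = y)"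
  proof
    fix v assume v: "v \<in> ?W"
    obtain c' j' i' where v': "v = (c',j',i')" by (cases v)
    show "{(c,j,i),v} \<in> edges (HH t) \<longleftrightarrow> (v = x \<or> v = y)"
      using v w wm unfolding v' by (auto simp: edgeH2 x_def y_def memH)
  qed
  have xy: "{x,y} \<notin> edges (HH t)"
  proof
    assume e: "{x,y} \<in> edges (HH t)"
    then have "x \<in> ?W" "y \<in> ?W" using edgeH_mem by auto
    then have "sadj x y" using e edgeH2 by auto
    then show False using wm by (auto simp: x_def y_def split: if_splits)
  qed
  have c1: "\<forall>a\<in>?W - {(c,j,i),x,y}. \<forall>b\<in>?W - {(c,j,i),x,y}. {a,b} \<in> edges (HH t) \<longrightarrow> \<sigma> a \<noteq> \<sigma> b"
  proof (intro ballI impI)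
    fix a b assume a: "a \<in> ?W - {(c,j,i),x,y}" and b: "b \<in> ?W - {(c,j,i),x,y}" and e: "{a,b} \<in> edges (HH t)"
    obtain ca ja ia where a': "a = (ca,ja,ia)" by (cases a)
    obtain cb jb ib where b': "b = (cb,jb,ib)" by (cases b)
    have "sadj a b" using e a b edgeH2 by auto
    then have s: "sadj (ca,ja,ia) (cb,jb,ib)" unfolding a' b' .
    then have par: "odd ia \<noteq> odd ib" by auto
    have ay: "a \<noteq> y" "b \<noteq> y" using a b by auto
    then have ay': "(ca,ja,ia) \<noteq> (c,j,i+1)" "(cb,jb,ib) \<noteq> (c,j,i+1)" unfolding a' b' y_def .
    have br: "(ca = c \<and> ja = j \<and> ia > i) = (cb = c \<and> jb = j \<and> ib > i)"
      using s ay' wm(3) by auto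
    show "\<sigma> a \<noteq> \<sigma> b" unfolding a' b' \<sigma>_def using par br by auto
  qed
  have c2: "\<forall>b\<in>?W - {(c,j,i),x,y}. {x,b} \<in> edges (HH t) \<longrightarrow> \<sigma> b"
  proof (intro ballI impI)
    fix b assume b: "b \<in> ?W - {(c,j,i),x,y}" and e: "{x,b} \<in> edges (HH t)"
    obtain cb jb ib where b': "b = (cb,jb,ib)" by (cases b)
    have "sadj x b" using e b xm edgeH2 by auto
    then have s: "sadj x (cb,jb,ib)" unfolding b' .
    have d: "cb = c \<and> (ib = i \<or> ib + 2 = i)"
    proof (cases "i = 1")
      case True
      then show ?thesis using s by (simp add: x_def)
    next
      case False
      then have "x = (c,j,i-1)" by (simp add: x_def)
      then show ?thesis using s False wm(2,3) by auto
    qed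
    then have "odd ib = odd i" by auto
    then show "\<sigma> b" unfolding b' \<sigma>_def using d by auto
  qed
  have c3: "\<forall>b\<in>?W - {(c,j,i),x,y}. {y,b} \<in> edges (HH t) \<longrightarrow> \<sigma> b = (q = 1)"
  proof (intro ballI impI)
    fix b assume b: "b \<in> ?W - {(c,j,i),x,y}" and e: "{y,b} \<in> edges (HH t)"
    obtain cb jb ib where b': "b = (cb,jb,ib)" by (cases b)
    have "y \<in> ?W" using e edgeH_mem by auto
    then have "sadj y b" using e b edgeH2 by auto
    then have s: "sadj (c,j,i+1) (cb,jb,ib)" unfolding b' y_def .
    have "b \<noteq> (c,j,i)" using b by auto
    then have nb: "\<not> (cb = c \<and> jb = j \<and> ib = i)" unfolding b' by auto
    have "cb = c \<and> jb = j \<and> (ib = i + 2 \<or> ib = i)" using s wm(2,3) by auto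
    then have bb: "cb = c" "jb = j" "ib = i + 2" using nb by auto
    show "\<sigma> b = (q = 1)"
    proof (cases "q = 1")
      case True then show ?thesis unfolding b' \<sigma>_def using bb by simp
    next
      case False then show ?thesis unfolding b' \<sigma>_def using bb by simp
    qed
  qed
  obtain \<beta> where \<beta>: "goodmap (Gq p q) (HH t) \<beta>"
     "\<forall>v\<in>?W. {(c,j,i),v} \<notin> edges (HH t) \<longrightarrow> {\<beta> (c,j,i), \<beta> v} \<notin> edges (Gq p q)"
    using w_good[OF fin cW p3 q w(1) xm d irr Nw xy c1 c2 c3] by blast
  then show ?thesis using z by blast
qed

lemma adjprop: assumes "a \<in> verts (HH t)" "b \<in> verts (HH t)" "{a,b} \<in> edges (HH t)"
  shows "fst a = fst b \<and> odd (snd (snd a)) \<noteq> odd (snd (snd b))"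
proof -
  obtain ca ja ia where a': "a = (ca,ja,ia)" by (cases a)
  obtain cb jb ib where b': "b = (cb,jb,ib)" by (cases b)
  have "sadj a b" using assms edgeH2 by auto
  then show ?thesis unfolding a' b' by auto
qed

lemma cardHH: "finite (verts (HH t)) \<and> card (verts (HH t)) \<le> t * (3*t+1)"
proof -
  let ?S = "{0..<t} \<times> insert (0::nat,0::nat) ({1,2,3} \<times> {1..t})"
  have sub: "verts (HH t) \<subseteq> ?S" by (auto simp: memH)
  have "(0::nat,0::nat) \<notin> {1,2,3} \<times> {1..t}" by auto
  then have "card ?S = t * (3*t+1)" by (simp add: card_cartesian_product)
  moreover have "finite ?S" by simp
  ultimately show ?thesis using sub by (metis card_mono finite_subset)
qed

lemma main_q:
  assumes t1: "t \<ge> 1" and p: "p \<ge> 3*t^2+t+1" and q: "q = 1 \<or> q = p"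
  shows "inter_arrow (Gq p q) (HH t)"
proof -
  let ?W = "verts (HH t)"
  have fin: "finite ?W" using cardHH by blast
  have "t * (3*t+1) = 3*t^2+t" by (simp add: power2_eq_square algebra_simps)
  then have cW: "card ?W \<le> p - 1" using cardHH[of t] p by linarith
  then have cWp: "card ?W \<le> p" by simp
  have p3: "p \<ge> 1" using p by simp
  have qr: "0 < q" "q < 2*p" using q p3 by auto
  let ?col = "\<lambda>a::nat\<times>nat\<times>nat. odd (snd (snd a))"
  have pc: "\<forall>u\<in>?W. \<forall>v\<in>?W. {u,v}\<in>edges (HH t) \<longrightarrow> ?col u \<noteq> ?col v"
    using adjprop by blast
  show ?thesis
  proof (rule family_arrow[OF GE_Gq[OF qr] fin])
    show "\<exists>b. goodmap (Gq p q) (HH t) b" using bip_good[OF fin cWp pc] by blast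
    show "\<forall>u\<in>?W. \<forall>v\<in>?W. {u,v} \<notin> edges (HH t) \<longrightarrow>
                 (\<exists>b. goodmap (Gq p q) (HH t) b \<and> {b u, b v} \<notin> edges (Gq p q))"
    proof (intro ballI impI)
      fix u v assume u: "u \<in> ?W" and v: "v \<in> ?W" and nE: "{u,v} \<notin> edges (HH t)"
      show "\<exists>b. goodmap (Gq p q) (HH t) b \<and> {b u, b v} \<notin> edges (Gq p q)"
      proof (cases "?col u = ?col v")
        case True
        then show ?thesis using bip_good[OF fin cWp pc, of q] u v by blast
      next
        case cd: False
        show ?thesis
        proof (cases "fst u = fst v")
          case False
          let ?s = "\<lambda>a::nat\<times>nat\<times>nat. ?col a \<noteq> (fst a = fst u)"
          have ps: "\<forall>a\<in>?W. \<forall>b\<in>?W. {a,b}\<in>edges (HH t) \<longrightarrow> ?s a \<noteq> ?s b"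
            using adjprop by fastforce
          have "?s u = ?s v" using False cd by auto
          then show ?thesis using bip_good[OF fin cWp ps, of q] u v by blast
        next
          case True
          obtain cu ju iu where u': "u = (cu,ju,iu)" by (cases u)
          obtain cv jv iv where v': "v = (cv,jv,iv)" by (cases v)
          show ?thesis
          proof (cases "ju = 0")
            case False
            then show ?thesis using wcase[OF t1 p q cW fin, of cu ju iu v] u v nE u' by blast
          next
            case True
            then have "iu = 0" using u u' by (auto simp: memH)
            then have "odd iv" using cd u' v' by simp
            then have "iv \<noteq> 0" by (cases iv) auto
            then have "jv \<noteq> 0" using v v' by (auto simp: memH)
            then obtain b where "goodmap (Gq p q) (HH t) b" "{b v, b u} \<notin> edges (Gq p q)"
              using wcase[OF t1 p q cW fin, of cv jv iv u] u v nE v' by (auto simp: insert_commute)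
            then show ?thesis by (auto simp: insert_commute)
          qed
        qed
      qed
    qed
  qed
qed

theorem mainTheorem6:
  fixes t p :: nat
  assumes "t \<ge> 1" and "p \<ge> 3 * t^2 + t + 1"
  shows "inter_arrow (Xg p) (copies t (spider t t t)) \<and>
         inter_arrow (Yg p) (copies t (spider t t t))"
  using main_q[OF assms] by (simp add: Xg_Gq Yg_Gq)

end
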